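(* Let $N$ be a probabilistic algorithmic knowledge structure, $i$ an agent, and $\phi$ a formula containing no occurrence of any $X_j$ operator. If $\mathtt{A}_i$ is $\phi$-complete and $(\alpha,\beta)$-reliable for $\phi$ in $N$, then (a) $N\models X_i\phi\wedge\neg K_i\neg\phi\Rightarrow\underline{\mathrm{Ev}}_i(\phi)\ge\frac{\alpha}{\alpha+\beta}$ if $(\alpha,\beta)\ne(0,0)$; (b) $N\models X_i\phi\wedge\neg K_i\neg\phi\Rightarrow\underline{\mathrm{Ev}}_i(\phi)=1$ if $(\alpha,\beta)=(0,0)$; (c) $N\models\neg X_i\phi\wedge\neg K_i\phi\Rightarrow\overline{\mathrm{Ev}}_i(\phi)\le\frac{1-\alpha}{2-(\alpha+\beta)}$ if $(\alpha,\beta)\ne(1,1)$; (d) $N\models\neg X_i\phi\wedge\neg K_i\phi\Rightarrow\overline{\mathrm{Ev}}_i(\phi)=0$ if $(\alpha,\beta)=(1,1)$.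
   Context: A derandomizer is $v=(v_1,\dots,v_n)$ with each $v_i$ a sequence of coin-toss outcomes; $V$ is the set of derandomizers. A probabilistic algorithmic knowledge structure is $N=(S,\pi,L_1,\dots,L_n,\mathtt{A}^d_1,\dots,\mathtt{A}^d_n,\nu)$ with states $S$, truth assignments $\pi(s)$ to primitive propositions, local-state functions $L_i:S\to\mathcal{L}$, deterministic functions $\mathtt{A}^d_i(\phi,\ell,s,v_i)\in\{$"Yes","No","?"$\}$ (the derandomized version of agent $i$'s knowledge algorithm $\mathtt{A}_i$), and a probability distribution $\nu$ on $V$ such that for all $i,\phi,s$ and each answer $a$, $\{v:\mathtt{A}^d_i(\phi,L_i(s),s,v_i)=a\}$ is nonempty iff it has positive $\nu$-probability. Semantics at pairs $(s,v)$: primitive propositions via $\pi$, $\neg,\wedge,\Rightarrow$ usual, $(N,s,v)\models K_i\phi$ iff $(N,t,v')\models\phi$ for all $v'\in V$ and all $t$ with $L_i(t)=L_i(s)$, $(N,s,v)\models X_i\phi$ iff $\mathtt{A}^d_i(\phi,L_i(s),s,v_i)=$"Yes", $(N,s,v)\models\Pr(\phi)\ge\alpha$ iff $\nu(\{v':(N,s,v')\models\phi\})\ge\alpha$; $N\models\psi$ means $(N,s,v)\models\psi$ for all $s,v$. For $\phi$ with no $X_j$, write $(N,s)\models\phi$ (independent of $v$). For local state $\ell$ of agent $i$: $S_\ell=\{s:L_i(s)=\ell\}$, $S_{\ell,\phi}=\{s\in S_\ell:(N,s)\models\phi\}$, $S_{\ell,\neg\phi}=\{s\in S_\ell:(N,s)\models\neg\phi\}$;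 $\mu_{s,\phi}(\mathit{ob})=\nu(\{v':\mathtt{A}^d_i(\phi,L_i(s),s,v'_i)=\mathit{ob}\})$; $\mathcal{F}_{\ell,\phi}(\phi)=\{\mu_{s,\phi}:s\in S_{\ell,\phi}\}$, $\mathcal{F}_{\ell,\phi}(\neg\phi)=\{\mu_{s,\phi}:s\in S_{\ell,\neg\phi}\}$; evidence space $\mathcal{E}_{\mathtt{A}_i,\phi,\ell}=(\{\phi,\neg\phi\},\{$"Yes","No","?"$\},\mathcal{F}_{\ell,\phi})$. For $\mathcal{E}=(\mathcal{H},\mathcal{O},\mathcal{F})$, $\mathcal{W}_{\mathcal{E}}(\mathit{ob},h)$ is the set of values $\mu_h(\mathit{ob})/\sum_{h'\in\mathcal{H},\mathcal{F}(h')\ne\emptyset}\mu_{h'}(\mathit{ob})$ over all choices $\mu_{h'}\in\mathcal{F}(h')$ (one per $h'$ with $\mathcal{F}(h')\ne\emptyset$) with nonzero denominator; $\underline{w}_{\mathcal{E}}=\inf\mathcal{W}_{\mathcal{E}}$, $\overline{w}_{\mathcal{E}}=\sup\mathcal{W}_{\mathcal{E}}$, both $0$ if the set is empty. $(N,s,v)\models\underline{\mathrm{Ev}}_i(\phi)\ge\alpha$ iff $\underline{w}_{\mathcal{E}_{\mathtt{A}_i,\phi,L_i(s)}}(\mathtt{A}^d_i(\phi,L_i(s),s,v_i),\phi)\ge\alpha$, and similarly for $\le,=$ and for $\overline{\mathrm{Ev}}_i$ with $\overline{w}$. $\mathtt{A}_i$ is $\phi$-complete in $N$ if $\mathtt{A}^d_i(\phi,L_i(s),s,v_i)\in\{$"Yes","No"$\}$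 for all $s,v$. For $\alpha,\beta\in[0,1]$, $\mathtt{A}_i$ is $(\alpha,\beta)$-reliable for $\phi$ in $N$ if for all $s,v$: $(N,s,v)\models\phi$ implies $\mu_{s,\phi}($"Yes"$)\ge\alpha$, and $(N,s,v)\models\neg\phi$ implies $\mu_{s,\phi}($"Yes"$)\le\beta$. *)

theory Defs
  imports "HOL-Probability.Probability"
begin

datatype answer = Yes | No | Unk

datatype ('p, 'ag) fml =
    Prim 'p
  | Neg "('p, 'ag) fml"
  | Conj "('p, 'ag) fml" "('p, 'ag) fml"
  | Imp "('p, 'ag) fml" "('p, 'ag) fml"
  | Kn 'ag "('p, 'ag) fml"
  | Xa 'ag "('p, 'ag) fml"
  | PrGe "('p, 'ag) fml" real

fun noX :: "('p, 'ag) fml \<Rightarrow> bool" where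
  "noX (Prim p) = True"
| "noX (Neg f) = noX f"
| "noX (Conj f g) = (noX f \<and> noX g)"
| "noX (Imp f g) = (noX f \<and> noX g)"
| "noX (Kn i f) = noX f"
| "noX (Xa i f) = False"
| "noX (PrGe f a) = noX f"

text \<open>States are the elements of
  type 's, local states of type 'l, a derandomizer is a function 'ag => 'c assigning
  to every agent its sequence of coin tosses (of type 'c); V is the set of all of them.
  The algorithm field is the derandomized algorithm A^d_i(phi, l, s, v_i).\<close>
record ('s, 'p, 'ag, 'l, 'c) pak =
  truth :: "'s \<Rightarrow> 'p \<Rightarrow> bool"
  loc :: "'ag \<Rightarrow> 's \<Rightarrow> 'l"
  alg :: "'ag \<Rightarrow> ('p, 'ag) fml \<Rightarrow> 'l \<Rightarrow> 's \<Rightarrow> 'c \<Rightarrow> answer"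
  nu :: "('ag \<Rightarrow> 'c) measure"

definition answer_set ::
  "('s, 'p, 'ag, 'l, 'c) pak \<Rightarrow> 'ag \<Rightarrow> ('p, 'ag) fml \<Rightarrow> 's \<Rightarrow> answer \<Rightarrow> ('ag \<Rightarrow> 'c) set" where
  "answer_set N i f s a = {v. alg N i f (loc N i s) s (v i) = a}"

definition wf_pak :: "('s, 'p, 'ag, 'l, 'c) pak \<Rightarrow> bool" where
  "wf_pak N \<longleftrightarrow> prob_space (nu N) \<and> space (nu N) = UNIV \<and>
     (\<forall>i f s a. answer_set N i f s a \<in> sets (nu N) \<and>
        (answer_set N i f s a \<noteq> {} \<longleftrightarrow> measure (nu N) (answer_set N i f s a) > 0))"

fun sat :: "('s, 'p, 'ag, 'l, 'c) pak \<Rightarrow> 's \<Rightarrow> ('ag \<Rightarrow> 'c) \<Rightarrow> ('p, 'ag) fml \<Rightarrow> bool" where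
  "sat N s v (Prim p) = truth N s p"
| "sat N s v (Neg f) = (\<not> sat N s v f)"
| "sat N s v (Conj f g) = (sat N s v f \<and> sat N s v g)"
| "sat N s v (Imp f g) = (sat N s v f \<longrightarrow> sat N s v g)"
| "sat N s v (Kn i f) = (\<forall>t v'. loc N i t = loc N i s \<longrightarrow> sat N t v' f)"
| "sat N s v (Xa i f) = (alg N i f (loc N i s) s (v i) = Yes)"
| "sat N s v (PrGe f a) = (measure (nu N) {v'. sat N s v' f} \<ge> a)"

definition valid :: "('s, 'p, 'ag, 'l, 'c) pak \<Rightarrow> ('p, 'ag) fml \<Rightarrow> bool" where
  "valid N f \<longleftrightarrow> (\<forall>s v. sat N s v f)"

definition mu :: "('s, 'p, 'ag, 'l, 'c) pak \<Rightarrow> 'ag \<Rightarrow> ('p, 'ag) fml \<Rightarrow> 's \<Rightarrow> answer \<Rightarrow> real" where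
  "mu N i f s ob = measure (nu N) (answer_set N i f s ob)"

text \<open>Evidence spaces with hypothesis type 'h (finite) and observations 'o;
  the family F maps each hypothesis to a set of distributions on observations.\<close>
definition Wset :: "('h::finite \<Rightarrow> ('o \<Rightarrow> real) set) \<Rightarrow> 'o \<Rightarrow> 'h \<Rightarrow> real set" where
  "Wset F ob h = {g h ob / (\<Sum>h'\<in>{h'. F h' \<noteq> {}}. g h' ob) | g.
       F h \<noteq> {} \<and> (\<forall>h'. F h' \<noteq> {} \<longrightarrow> g h' \<in> F h') \<and> (\<Sum>h'\<in>{h'. F h' \<noteq> {}}. g h' ob) \<noteq> 0}"

definition w_lower :: "('h::finite \<Rightarrow> ('o \<Rightarrow> real) set) \<Rightarrow> 'o \<Rightarrow> 'h \<Rightarrow> real" where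
  "w_lower F ob h = (if Wset F ob h = {} then 0 else Inf (Wset F ob h))"

definition w_upper :: "('h::finite \<Rightarrow> ('o \<Rightarrow> real) set) \<Rightarrow> 'o \<Rightarrow> 'h \<Rightarrow> real" where
  "w_upper F ob h = (if Wset F ob h = {} then 0 else Sup (Wset F ob h))"

text \<open>F_{l,phi}: hypothesis True stands for phi, False for not phi.
  (N,s) |= phi for X-free phi is rendered as: phi holds at (s,v) for all v.\<close>
definition Fam :: "('s, 'p, 'ag, 'l, 'c) pak \<Rightarrow> 'ag \<Rightarrow> ('p, 'ag) fml \<Rightarrow> 'l \<Rightarrow> bool \<Rightarrow> (answer \<Rightarrow> real) set" where
  "Fam N i f l h =
     (if h then {mu N i f s | s. loc N i s = l \<and> (\<forall>v. sat N s v f)}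
      else {mu N i f s | s. loc N i s = l \<and> (\<forall>v. sat N s v (Neg f))})"

definition Ev_lower :: "('s, 'p, 'ag, 'l, 'c) pak \<Rightarrow> 'ag \<Rightarrow> ('p, 'ag) fml \<Rightarrow> 's \<Rightarrow> ('ag \<Rightarrow> 'c) \<Rightarrow> real" where
  "Ev_lower N i f s v = w_lower (Fam N i f (loc N i s)) (alg N i f (loc N i s) s (v i)) True"

definition Ev_upper :: "('s, 'p, 'ag, 'l, 'c) pak \<Rightarrow> 'ag \<Rightarrow> ('p, 'ag) fml \<Rightarrow> 's \<Rightarrow> ('ag \<Rightarrow> 'c) \<Rightarrow> real" where
  "Ev_upper N i f s v = w_upper (Fam N i f (loc N i s)) (alg N i f (loc N i s) s (v i)) True"

definition complete_for :: "('s, 'p, 'ag, 'l, 'c) pak \<Rightarrow> 'ag \<Rightarrow> ('p, 'ag) fml \<Rightarrow> bool" where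
  "complete_for N i f \<longleftrightarrow> (\<forall>s v. alg N i f (loc N i s) s (v i) \<in> {Yes, No})"

definition reliable_for :: "('s, 'p, 'ag, 'l, 'c) pak \<Rightarrow> 'ag \<Rightarrow> real \<Rightarrow> real \<Rightarrow> ('p, 'ag) fml \<Rightarrow> bool" where
  "reliable_for N i a b f \<longleftrightarrow>
     (\<forall>s v. (sat N s v f \<longrightarrow> mu N i f s Yes \<ge> a) \<and> (sat N s v (Neg f) \<longrightarrow> mu N i f s Yes \<le> b))"

end

theory Submission imports Defs begin

lemma sat_noX: "noX f \<Longrightarrow> sat N s v f = sat N s v' f"
  by (induction f) auto

lemma Wset_elem:
  assumes "x \<in> Wset F ob True"
  shows "\<exists>a\<in>F True. (F False = {} \<and> x = 1 \<and> a ob \<noteq> 0) \<or>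
           (\<exists>b\<in>F False. x = a ob / (a ob + b ob) \<and> a ob + b ob \<noteq> 0)"
proof -
  obtain g where x: "x = g True ob / (\<Sum>h'\<in>{h'. F h' \<noteq> {}}. g h' ob)" and ne: "F True \<noteq> {}"
    and g: "\<forall>h'. F h' \<noteq> {} \<longrightarrow> g h' \<in> F h'" and S: "(\<Sum>h'\<in>{h'. F h' \<noteq> {}}. g h' ob) \<noteq> 0"
    using assms unfolding Wset_def by blast
  show ?thesis
  proof (cases "F False = {}")
    case True
    then have e: "{h'. F h' \<noteq> {}} = {True}" using ne unfolding set_eq_iff by (intro allI, case_tac x) auto
    show ?thesis using x S g ne True unfolding e by auto
  next
    case False
    then have e: "{h'. F h' \<noteq> {}} = UNIV" using ne unfolding set_eq_iff by (intro allI, case_tac x) auto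
    have "(\<Sum>h'\<in>(UNIV::bool set). g h' ob) = g True ob + g False ob"
      by (simp add: UNIV_bool)
    then show ?thesis using x S g ne False unfolding e by auto
  qed
qed

lemma Wset_intro1:
  assumes "a \<in> F True" "F False = {}" "a ob \<noteq> 0" shows "1 \<in> Wset F ob True"
proof -
  have e: "{h'. F h' \<noteq> {}} = {True}" using assms unfolding set_eq_iff by (intro allI, case_tac x) auto
  have g: "\<forall>h'. F h' \<noteq> {} \<longrightarrow> a \<in> F h'"
  proof (intro allI impI)
    fix h' assume "F h' \<noteq> {}"
    then have "h' \<in> {h'. F h' \<noteq> {}}" by simp
    then have "h' = True" using e by simp
    then show "a \<in> F h'" using assms by simp
  qed
  show ?thesis unfolding Wset_def e
    apply (rule CollectI)
    apply (rule exI[of _ "\<lambda>h. a"])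
    using assms g by (intro conjI) auto
qed

lemma Wset_intro2:
  assumes "a \<in> F True" "b \<in> F False" "a ob + b ob \<noteq> 0"
  shows "a ob / (a ob + b ob) \<in> Wset F ob True"
proof -
  have e: "{h'. F h' \<noteq> {}} = UNIV" using assms unfolding set_eq_iff by (intro allI, case_tac x) auto
  have s: "\<And>g. (\<Sum>h'\<in>(UNIV::bool set). g h' ob) = g True ob + g False ob"
    by (simp add: UNIV_bool add.commute)
  have g: "\<forall>h'. F h' \<noteq> {} \<longrightarrow> (if h' then a else b) \<in> F h'"
  proof (intro allI impI)
    fix h' :: bool
    show "(if h' then a else b) \<in> F h'" using assms by (cases h') auto
  qed
  show ?thesis unfolding Wset_def e s
    apply (rule CollectI)
    apply (rule exI[of _ "\<lambda>h. if h then a else b"])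
    using assms g by (intro conjI) auto
qed


lemma ratio_lower:
  fixes a b al be :: real
  assumes "a \<ge> al" "b \<le> be" "b \<ge> 0" "al \<ge> 0" "a + b \<noteq> 0"
  shows "al / (al + be) \<le> a / (a + b)"
proof (cases "al + be = 0")
  case True then show ?thesis using assms by simp
next
  case False
  then have p: "al + be > 0" using assms by linarith
  have q: "a + b > 0" using assms by linarith
  have "al * b \<le> a * be" using assms by (meson mult_mono order_trans mult_right_mono)
  then have "al * (a + b) \<le> a * (al + be)" by (simp add: algebra_simps)
  then show ?thesis using p q by (simp add: divide_simps mult.commute)
qed

lemma ratio_upper:
  fixes a b A B :: real
  assumes "a \<le> A" "b \<ge> B" "a \<ge> 0" "B \<ge> 0" "a + b \<noteq> 0" "A + B > 0"
  shows "a / (a + b) \<le> A / (A + B)"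
proof -
  have q: "a + b > 0" using assms by linarith
  have "a * B \<le> A * b" using assms by (meson mult_mono order_trans mult_left_mono)
  then have "a * (A + B) \<le> A * (a + b)" by (simp add: algebra_simps)
  then show ?thesis using assms q by (simp add: divide_simps mult.commute)
qed

theorem proposition5p3:
  fixes N :: "('s, 'p, 'ag, 'l, 'c) pak" and i :: 'ag and \<phi> :: "('p, 'ag) fml"
    and \<alpha> \<beta> :: real
  assumes "wf_pak N"
    and "noX \<phi>"
    and "\<alpha> \<in> {0..1}" and "\<beta> \<in> {0..1}"
    and "complete_for N i \<phi>"
    and "reliable_for N i \<alpha> \<beta> \<phi>"
  shows
    "((\<alpha>, \<beta>) \<noteq> (0, 0) \<longrightarrow>
       (\<forall>s v. sat N s v (Conj (Xa i \<phi>) (Neg (Kn i (Neg \<phi>)))) \<longrightarrow>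
              Ev_lower N i \<phi> s v \<ge> \<alpha> / (\<alpha> + \<beta>)))
   \<and> ((\<alpha>, \<beta>) = (0, 0) \<longrightarrow>
       (\<forall>s v. sat N s v (Conj (Xa i \<phi>) (Neg (Kn i (Neg \<phi>)))) \<longrightarrow>
              Ev_lower N i \<phi> s v = 1))
   \<and> ((\<alpha>, \<beta>) \<noteq> (1, 1) \<longrightarrow>
       (\<forall>s v. sat N s v (Conj (Neg (Xa i \<phi>)) (Neg (Kn i \<phi>))) \<longrightarrow>
              Ev_upper N i \<phi> s v \<le> (1 - \<alpha>) / (2 - (\<alpha> + \<beta>))))
   \<and> ((\<alpha>, \<beta>) = (1, 1) \<longrightarrow>
       (\<forall>s v. sat N s v (Conj (Neg (Xa i \<phi>)) (Neg (Kn i \<phi>))) \<longrightarrow>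
              Ev_upper N i \<phi> s v = 0))"
proof -
  have ps: "prob_space (nu N)" and sp: "space (nu N) = UNIV"
    and meas: "\<And>f t a. answer_set N i f t a \<in> sets (nu N)"
    and pos: "\<And>f t a. answer_set N i f t a \<noteq> {} \<Longrightarrow> mu N i f t a > 0"
    using assms(1) unfolding wf_pak_def mu_def by auto
  have nn: "\<And>t ob. mu N i \<phi> t ob \<ge> 0" unfolding mu_def by simp
  have noyes: "\<And>t. mu N i \<phi> t No = 1 - mu N i \<phi> t Yes"
  proof -
    fix t
    have "answer_set N i \<phi> t No = space (nu N) - answer_set N i \<phi> t Yes"
      using assms(5) sp unfolding complete_for_def answer_set_def
      by auto
    then show "mu N i \<phi> t No = 1 - mu N i \<phi> t Yes"
      unfolding mu_def using prob_space.prob_compl[OF ps meas] by simp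
  qed
  have indep: "\<And>t v v'. sat N t v \<phi> = sat N t v' \<phi>" by (rule sat_noX[OF assms(2)])
  have al: "0 \<le> \<alpha>" "\<alpha> \<le> 1" and be: "0 \<le> \<beta>" "\<beta> \<le> 1" using assms(3,4) by auto
  have relT: "mu N i \<phi> t Yes \<ge> \<alpha>" if "sat N t v \<phi>" for t v
    using assms(6) that unfolding reliable_for_def by blast
  have relF: "mu N i \<phi> t Yes \<le> \<beta>" if "\<not> sat N t v \<phi>" for t v
  proof -
    have "sat N t v (Neg \<phi>)" using that by simp
    then show ?thesis using assms(6) unfolding reliable_for_def by blast
  qed
  have FT: "a Yes \<ge> \<alpha> \<and> a No \<le> 1 - \<alpha> \<and> a Yes \<ge> 0 \<and> a No \<ge> 0"
    if a: "a \<in> Fam N i \<phi> l True" for l a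
  proof -
    obtain t where t: "a = mu N i \<phi> t" "\<forall>v. sat N t v \<phi>" using a unfolding Fam_def by auto
    have "mu N i \<phi> t Yes \<ge> \<alpha>" using relT t(2) by meson
    then show ?thesis using t(1) noyes[of t] nn[of t Yes] nn[of t No] by simp
  qed
  have FF: "a Yes \<le> \<beta> \<and> a No \<ge> 1 - \<beta> \<and> a Yes \<ge> 0 \<and> a No \<ge> 0"
    if a: "a \<in> Fam N i \<phi> l False" for l a
  proof -
    obtain t where t: "a = mu N i \<phi> t" "\<forall>v. \<not> sat N t v \<phi>" using a unfolding Fam_def by auto
    have "mu N i \<phi> t Yes \<le> \<beta>" using relF t(2) by meson
    then show ?thesis using t(1) noyes[of t] nn[of t Yes] nn[of t No] by simp
  qed
  have inT: "mu N i \<phi> t \<in> Fam N i \<phi> (loc N i t) True" if "sat N t v \<phi>" for t v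
  proof -
    have "\<forall>v'. sat N t v' \<phi>" using that indep by blast
    then show ?thesis unfolding Fam_def by auto
  qed
  have inF: "mu N i \<phi> t \<in> Fam N i \<phi> (loc N i t) False" if "\<not> sat N t v \<phi>" for t v
  proof -
    have "\<forall>v'. sat N t v' (Neg \<phi>)" using that indep by auto
    then show ?thesis unfolding Fam_def by auto
  qed
  have AB: "(\<forall>s v. sat N s v (Conj (Xa i \<phi>) (Neg (Kn i (Neg \<phi>)))) \<longrightarrow>
              Ev_lower N i \<phi> s v \<ge> \<alpha> / (\<alpha> + \<beta>)) \<and>
     ((\<alpha>, \<beta>) = (0, 0) \<longrightarrow>
       (\<forall>s v. sat N s v (Conj (Xa i \<phi>) (Neg (Kn i (Neg \<phi>)))) \<longrightarrow>
              Ev_lower N i \<phi> s v = 1))"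
  proof -
    have main: "Wset (Fam N i \<phi> (loc N i s)) Yes True \<noteq> {} \<and>
        (\<forall>x \<in> Wset (Fam N i \<phi> (loc N i s)) Yes True. x \<ge> \<alpha> / (\<alpha> + \<beta>) \<and> ((\<alpha>, \<beta>) = (0, 0) \<longrightarrow> x = 1))"
      if h: "sat N s v (Conj (Xa i \<phi>) (Neg (Kn i (Neg \<phi>))))" for s v
    proof -
      define F where "F = Fam N i \<phi> (loc N i s)"
      have y: "alg N i \<phi> (loc N i s) s (v i) = Yes" using h by simp
      then have ys: "mu N i \<phi> s Yes > 0" using pos unfolding answer_set_def by blast
      obtain t v' where t: "loc N i t = loc N i s" "sat N t v' \<phi>" using h by auto
      have aT: "mu N i \<phi> t \<in> F True" using inT[OF t(2)] t(1) F_def by simp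
      have ne: "Wset F Yes True \<noteq> {}"
      proof (cases "sat N s v \<phi>")
        case True
        then have sT: "mu N i \<phi> s \<in> F True" using inT F_def by simp
        show ?thesis
        proof (cases "F False = {}")
          case True then show ?thesis using Wset_intro1[OF sT True, of Yes] ys by auto
        next
          case False
          then obtain b where b: "b \<in> F False" by auto
          then have "b Yes \<ge> 0" using FF F_def by blast
          then show ?thesis using Wset_intro2[OF sT b] ys by (metis add_pos_nonneg empty_iff less_irrefl)
        qed
      next
        case False
        then have sF: "mu N i \<phi> s \<in> F False" using inF F_def by simp
        have "mu N i \<phi> t Yes \<ge> 0" using nn by simp
        then show ?thesis using Wset_intro2[OF aT sF] ys by (metis add_nonneg_pos empty_iff less_irrefl)
      qed
      have "\<alpha> / (\<alpha> + \<beta>) \<le> 1" using al be by (cases "\<alpha> + \<beta> = 0") (auto simp: divide_le_eq_1)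
      moreover have "x \<ge> \<alpha> / (\<alpha> + \<beta>) \<and> ((\<alpha>, \<beta>) = (0, 0) \<longrightarrow> x = 1)"
        if x: "x \<in> Wset F Yes True" for x
      proof -
        from Wset_elem[OF x] obtain a where a: "a \<in> F True" and
          c: "(F False = {} \<and> x = 1 \<and> a Yes \<noteq> 0) \<or>
           (\<exists>b\<in>F False. x = a Yes / (a Yes + b Yes) \<and> a Yes + b Yes \<noteq> 0)" by blast
        show ?thesis
        proof (cases "F False = {} \<and> x = 1 \<and> a Yes \<noteq> 0")
          case True then show ?thesis using \<open>\<alpha> / (\<alpha> + \<beta>) \<le> 1\<close> by simp
        next
          case False
          then obtain b where b: "b \<in> F False" "x = a Yes / (a Yes + b Yes)" "a Yes + b Yes \<noteq> 0"
            using c by blast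
          have fa: "a Yes \<ge> \<alpha>" "a Yes \<ge> 0" using FT a F_def by blast+
          have fb: "b Yes \<le> \<beta>" "b Yes \<ge> 0" using FF b(1) F_def by blast+
          have "x \<ge> \<alpha> / (\<alpha> + \<beta>)" using ratio_lower[OF fa(1) fb(1) fb(2) al(1) b(3)] b(2) by simp
          moreover have "(\<alpha>, \<beta>) = (0, 0) \<longrightarrow> x = 1"
          proof
            assume "(\<alpha>, \<beta>) = (0, 0)"
            then have "b Yes = 0" using fb by simp
            then show "x = 1" using b by simp
          qed
          ultimately show ?thesis by blast
        qed
      qed
      ultimately show ?thesis using ne F_def by blast
    qed
    show ?thesis
    proof (intro conjI allI impI)
      fix s v assume h: "sat N s v (Conj (Xa i \<phi>) (Neg (Kn i (Neg \<phi>))))"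
      note m = main[OF h]
      have y: "alg N i \<phi> (loc N i s) s (v i) = Yes" using h by simp
      show "Ev_lower N i \<phi> s v \<ge> \<alpha> / (\<alpha> + \<beta>)"
        unfolding Ev_lower_def w_lower_def y using m
        by (auto intro!: cInf_greatest)
    next
      fix s v assume z: "(\<alpha>, \<beta>) = (0, 0)" and h: "sat N s v (Conj (Xa i \<phi>) (Neg (Kn i (Neg \<phi>))))"
      note m = main[OF h]
      have y: "alg N i \<phi> (loc N i s) s (v i) = Yes" using h by simp
      have "Wset (Fam N i \<phi> (loc N i s)) Yes True = {1}" using m z by auto
      then show "Ev_lower N i \<phi> s v = 1"
        unfolding Ev_lower_def w_lower_def y by simp
    qed
  qed
  have CD: "(\<forall>s v. sat N s v (Conj (Neg (Xa i \<phi>)) (Neg (Kn i \<phi>))) \<longrightarrow>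
              Ev_upper N i \<phi> s v \<le> (1 - \<alpha>) / (2 - (\<alpha> + \<beta>))) \<and>
     ((\<alpha>, \<beta>) = (1, 1) \<longrightarrow>
       (\<forall>s v. sat N s v (Conj (Neg (Xa i \<phi>)) (Neg (Kn i \<phi>))) \<longrightarrow>
              Ev_upper N i \<phi> s v = 0))"
  proof -
    have bnd: "(1 - \<alpha>) / (2 - (\<alpha> + \<beta>)) \<ge> 0" using al be by simp
    have main: "\<forall>x \<in> Wset (Fam N i \<phi> (loc N i s)) No True.
         x \<le> (1 - \<alpha>) / (2 - (\<alpha> + \<beta>)) \<and> ((\<alpha>, \<beta>) = (1, 1) \<longrightarrow> x = 0)"
      if h: "sat N s v (Conj (Neg (Xa i \<phi>)) (Neg (Kn i \<phi>)))" for s v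
    proof
      define F where "F = Fam N i \<phi> (loc N i s)"
      obtain t v' where t: "loc N i t = loc N i s" "\<not> sat N t v' \<phi>" using h by auto
      have bF: "mu N i \<phi> t \<in> F False" using inF[OF t(2)] t(1) F_def by simp
      fix x assume x: "x \<in> Wset (Fam N i \<phi> (loc N i s)) No True"
      from Wset_elem[OF x[folded F_def]] bF obtain a b where a: "a \<in> F True" and
          b: "b \<in> F False" "x = a No / (a No + b No)" "a No + b No \<noteq> 0" by blast
      have fa: "a No \<le> 1 - \<alpha>" "a No \<ge> 0" using FT a F_def by blast+
      have fb: "b No \<ge> 1 - \<beta>" "b No \<ge> 0" using FF b(1) F_def by blast+
      show "x \<le> (1 - \<alpha>) / (2 - (\<alpha> + \<beta>)) \<and> ((\<alpha>, \<beta>) = (1, 1) \<longrightarrow> x = 0)"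
      proof (cases "(\<alpha>, \<beta>) = (1, 1)")
        case True
        then have "a No = 0" using fa by simp
        then show ?thesis using b True by simp
      next
        case False
        then have p: "(1 - \<alpha>) + (1 - \<beta>) > 0" using al be by auto
        have "x \<le> (1 - \<alpha>) / ((1 - \<alpha>) + (1 - \<beta>))"
          using ratio_upper[OF fa(1) fb(1) fa(2) _ b(3) p] be b(2) by simp
        then show ?thesis using False by (auto simp: algebra_simps)
      qed
    qed
    show ?thesis
    proof (intro conjI allI impI)
      fix s v assume h: "sat N s v (Conj (Neg (Xa i \<phi>)) (Neg (Kn i \<phi>)))"
      note m = main[OF h]
      have "alg N i \<phi> (loc N i s) s (v i) \<in> {Yes, No}" using assms(5) unfolding complete_for_def by blast
      then have y: "alg N i \<phi> (loc N i s) s (v i) = No" using h by auto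
      show "Ev_upper N i \<phi> s v \<le> (1 - \<alpha>) / (2 - (\<alpha> + \<beta>))"
        unfolding Ev_upper_def w_upper_def y using m bnd
        by (auto intro!: cSup_least)
    next
      fix s v assume z: "(\<alpha>, \<beta>) = (1, 1)" and h: "sat N s v (Conj (Neg (Xa i \<phi>)) (Neg (Kn i \<phi>)))"
      note m = main[OF h]
      have "alg N i \<phi> (loc N i s) s (v i) \<in> {Yes, No}" using assms(5) unfolding complete_for_def by blast
      then have y: "alg N i \<phi> (loc N i s) s (v i) = No" using h by auto
      have "Wset (Fam N i \<phi> (loc N i s)) No True \<subseteq> {0}" using m z by auto
      then have "Wset (Fam N i \<phi> (loc N i s)) No True = {} \<or> Wset (Fam N i \<phi> (loc N i s)) No True = {0}"
        by blast
      then show "Ev_upper N i \<phi> s v = 0"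
        unfolding Ev_upper_def w_upper_def y by (elim disjE) simp_all
    qed
  qed
  show ?thesis using AB CD by blast
qed

end
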